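(* Let $(X,\tau)$ be a real Hausdorff extended locally convex space with finest locally convex topology $\tau_F$, and let $A\subseteq X$ be such that both $A$ and its complement $A^c=X\setminus A$ are convex. Then the following are equivalent: (i) $\mathrm{core}(A^c)=A^c$ and $A$ is closed in $(X,\tau)$; (ii) $A$ is closed in $(X,\tau_F)$.
   Context: An extended seminorm on a real vector space $X$ is a map $\rho:X\to[0,\infty]$ with $\rho(\alpha x)=|\alpha|\rho(x)$ and $\rho(x+y)\le\rho(x)+\rho(y)$. An extended locally convex space $(X,\tau)$ is a vector space with the topology induced by a family $\{\rho_i\}$ of extended seminorms (neighborhood base at $x_0$: $\{x:\max_{i\in J}\rho_i(x-x_0)<\varepsilon\}$, $J$ finite, $\varepsilon>0$). A locally convex topology is one induced in this way by finite-valued seminorms. The finest locally convex topology $\tau_F$ of $(X,\tau)$ is the locally convex topology on $X$ with $\tau_F\subseteq\tau$ such that every locally convex topology $\sigma\subseteq\tau$ on $X$ satisfies $\sigma\subseteq\tau_F$. For $B\subseteq X$, $a\in\mathrm{core}(B)$ means: for every $x\in X$ there is $\delta_x>0$ with $a+tx\in B$ for all $0\le t\le\delta_x$. *)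

theory Defs
  imports "HOL-Analysis.Analysis" "HOL-Library.Extended_Nonnegative_Real"
begin

text \<open>Extended seminorm: values in [0,\<infinity>] (ennreal), absolutely homogeneous
  (with 0 * \<infinity> = 0) and subadditive.\<close>
definition ext_seminorm :: "('a::real_vector \<Rightarrow> ennreal) \<Rightarrow> bool" where
  "ext_seminorm \<rho> \<longleftrightarrow>
     (\<forall>\<alpha> x. \<rho> (\<alpha> *\<^sub>R x) = ennreal \<bar>\<alpha>\<bar> * \<rho> x) \<and>
     (\<forall>x y. \<rho> (x + y) \<le> \<rho> x + \<rho> y)"

definition seminorm_topology :: "('a::real_vector \<Rightarrow> ennreal) set \<Rightarrow> 'a topology" where
  "seminorm_topology P = topology (\<lambda>U. \<forall>x0\<in>U. \<exists>J \<epsilon>. finite J \<and> J \<subseteq> P \<and> \<epsilon> > (0::real) \<and>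
       {x. \<forall>\<rho>\<in>J. \<rho> (x - x0) < ennreal \<epsilon>} \<subseteq> U)"

definition ext_locally_convex :: "'a::real_vector topology \<Rightarrow> bool" where
  "ext_locally_convex \<tau> \<longleftrightarrow>
     (\<exists>P. (\<forall>\<rho>\<in>P. ext_seminorm \<rho>) \<and> \<tau> = seminorm_topology P)"

definition locally_convex :: "'a::real_vector topology \<Rightarrow> bool" where
  "locally_convex \<tau> \<longleftrightarrow>
     (\<exists>P. (\<forall>\<rho>\<in>P. ext_seminorm \<rho> \<and> (\<forall>x. \<rho> x < \<infinity>)) \<and> \<tau> = seminorm_topology P)"

definition coarser :: "'a topology \<Rightarrow> 'a topology \<Rightarrow> bool" where
  "coarser \<sigma> \<tau> \<longleftrightarrow> (\<forall>U. openin \<sigma> U \<longrightarrow> openin \<tau> U)"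

definition finest_lc_topology :: "'a::real_vector topology \<Rightarrow> 'a topology \<Rightarrow> bool" where
  "finest_lc_topology \<tau> \<tau>F \<longleftrightarrow> locally_convex \<tau>F \<and> coarser \<tau>F \<tau> \<and>
     (\<forall>\<sigma>. locally_convex \<sigma> \<and> coarser \<sigma> \<tau> \<longrightarrow> coarser \<sigma> \<tau>F)"

definition algebraic_core :: "'a::real_vector set \<Rightarrow> 'a set" where
  "algebraic_core B = {a. \<forall>x. \<exists>\<delta>>0. \<forall>t. 0 \<le> t \<and> t \<le> \<delta> \<longrightarrow> a + t *\<^sub>R x \<in> B}"

end

theory Submission
  imports Defs
begin

lemma istop_sn:
  fixes P :: "('a::real_vector \<Rightarrow> ennreal) set"
  shows "istopology (\<lambda>U. \<forall>x0\<in>U. \<exists>J \<epsilon>. finite J \<and> J \<subseteq> P \<and> \<epsilon> > (0::real) \<and>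
       {x. \<forall>\<rho>\<in>J. \<rho> (x - x0) < ennreal \<epsilon>} \<subseteq> U)"
  unfolding istopology_def
proof (intro conjI allI impI)
  fix S T :: "'a::real_vector set"
  assume S: "\<forall>x0\<in>S. \<exists>J \<epsilon>. finite J \<and> J \<subseteq> P \<and> \<epsilon> > (0::real) \<and>
       {x. \<forall>\<rho>\<in>J. \<rho> (x - x0) < ennreal \<epsilon>} \<subseteq> S"
    and T: "\<forall>x0\<in>T. \<exists>J \<epsilon>. finite J \<and> J \<subseteq> P \<and> \<epsilon> > (0::real) \<and>
       {x. \<forall>\<rho>\<in>J. \<rho> (x - x0) < ennreal \<epsilon>} \<subseteq> T"
  show "\<forall>x0\<in>S \<inter> T. \<exists>J \<epsilon>. finite J \<and> J \<subseteq> P \<and> \<epsilon> > (0::real) \<and>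
       {x. \<forall>\<rho>\<in>J. \<rho> (x - x0) < ennreal \<epsilon>} \<subseteq> S \<inter> T"
  proof
    fix x0 assume x0: "x0 \<in> S \<inter> T"
    obtain J1 e1 where 1: "finite J1" "J1 \<subseteq> P" "e1 > 0" "{x. \<forall>\<rho>\<in>J1. \<rho> (x - x0) < ennreal e1} \<subseteq> S"
      using S x0 by (meson IntD1)
    obtain J2 e2 where 2: "finite J2" "J2 \<subseteq> P" "e2 > 0" "{x. \<forall>\<rho>\<in>J2. \<rho> (x - x0) < ennreal e2} \<subseteq> T"
      using T x0 by (meson IntD2)
    have "{x. \<forall>\<rho>\<in>J1 \<union> J2. \<rho> (x - x0) < ennreal (min e1 e2)} \<subseteq> S \<inter> T"
    proof
      fix x assume x: "x \<in> {x. \<forall>\<rho>\<in>J1 \<union> J2. \<rho> (x - x0) < ennreal (min e1 e2)}"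
      have m1: "ennreal (min e1 e2) \<le> ennreal e1" "ennreal (min e1 e2) \<le> ennreal e2"
        by (simp_all add: ennreal_leI)
      have xx: "\<rho> (x - x0) < ennreal (min e1 e2)" if "\<rho> \<in> J1 \<union> J2" for \<rho>
        using x that by simp
      have "\<forall>\<rho>\<in>J1. \<rho> (x - x0) < ennreal e1"
      proof
        fix \<rho> assume "\<rho> \<in> J1"
        then have "\<rho> (x - x0) < ennreal (min e1 e2)" using xx by simp
        then show "\<rho> (x - x0) < ennreal e1" using m1(1) by (rule less_le_trans)
      qed
      moreover have "\<forall>\<rho>\<in>J2. \<rho> (x - x0) < ennreal e2"
      proof
        fix \<rho> assume "\<rho> \<in> J2"
        then have "\<rho> (x - x0) < ennreal (min e1 e2)" using xx by simp
        then show "\<rho> (x - x0) < ennreal e2" using m1(2) by (rule less_le_trans)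
      qed
      ultimately show "x \<in> S \<inter> T" using 1 2 by blast
    qed
    then show "\<exists>J \<epsilon>. finite J \<and> J \<subseteq> P \<and> \<epsilon> > (0::real) \<and>
       {x. \<forall>\<rho>\<in>J. \<rho> (x - x0) < ennreal \<epsilon>} \<subseteq> S \<inter> T"
      using 1 2 by (intro exI[of _ "J1 \<union> J2"] exI[of _ "min e1 e2"]) auto
  qed
next
  fix K :: "'a set set"
  assume K: "\<forall>S\<in>K. \<forall>x0\<in>S. \<exists>J \<epsilon>. finite J \<and> J \<subseteq> P \<and> \<epsilon> > (0::real) \<and>
       {x. \<forall>\<rho>\<in>J. \<rho> (x - x0) < ennreal \<epsilon>} \<subseteq> S"
  show "\<forall>x0\<in>\<Union>K. \<exists>J \<epsilon>. finite J \<and> J \<subseteq> P \<and> \<epsilon> > (0::real) \<and>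
       {x. \<forall>\<rho>\<in>J. \<rho> (x - x0) < ennreal \<epsilon>} \<subseteq> \<Union>K"
  proof
    fix x0 assume "x0 \<in> \<Union>K"
    then obtain S where S: "S \<in> K" "x0 \<in> S" by blast
    have "\<forall>x0\<in>S. \<exists>J \<epsilon>. finite J \<and> J \<subseteq> P \<and> \<epsilon> > (0::real) \<and>
       {x. \<forall>\<rho>\<in>J. \<rho> (x - x0) < ennreal \<epsilon>} \<subseteq> S" using K S(1) by (rule bspec)
    then have "\<exists>J \<epsilon>. finite J \<and> J \<subseteq> P \<and> \<epsilon> > (0::real) \<and>
       {x. \<forall>\<rho>\<in>J. \<rho> (x - x0) < ennreal \<epsilon>} \<subseteq> S" using S(2) by (rule bspec)
    then obtain J \<epsilon> where J: "finite J" "J \<subseteq> P" "\<epsilon> > (0::real)"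
      "{x. \<forall>\<rho>\<in>J. \<rho> (x - x0) < ennreal \<epsilon>} \<subseteq> S"
      by (elim exE conjE)
    have "S \<subseteq> \<Union>K" using S by blast
    then have "{x. \<forall>\<rho>\<in>J. \<rho> (x - x0) < ennreal \<epsilon>} \<subseteq> \<Union>K" using J(4) by (rule order_trans[rotated])
    then show "\<exists>J \<epsilon>. finite J \<and> J \<subseteq> P \<and> \<epsilon> > (0::real) \<and>
       {x. \<forall>\<rho>\<in>J. \<rho> (x - x0) < ennreal \<epsilon>} \<subseteq> \<Union>K"
      using J by blast
  qed
qed

lemma openin_sn:
  "openin (seminorm_topology P) U \<longleftrightarrow> (\<forall>x0\<in>U. \<exists>J \<epsilon>. finite J \<and> J \<subseteq> P \<and> \<epsilon> > (0::real) \<and>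
       {x. \<forall>\<rho>\<in>J. \<rho> (x - x0) < ennreal \<epsilon>} \<subseteq> U)"
  unfolding seminorm_topology_def using istop_sn[of P] by (simp add: topology_inverse')

lemma topspace_sn: "topspace (seminorm_topology P) = UNIV"
proof -
  have "openin (seminorm_topology P) UNIV" unfolding openin_sn
    by (intro ballI exI[of _ "{}"] exI[of _ 1]) auto
  then show ?thesis by (metis openin_subset top.extremum_unique)
qed


lemma ball_gt: "\<forall>\<epsilon>>0. P \<epsilon> \<Longrightarrow> (\<epsilon>::real) > 0 \<Longrightarrow> P \<epsilon>" by blast

lemma coarser_sn:
  fixes P Q :: "('a::real_vector \<Rightarrow> ennreal) set"
  assumes cont: "\<forall>q\<in>Q. \<forall>\<epsilon>>0. \<exists>J \<delta>. finite J \<and> J \<subseteq> P \<and> \<delta> > (0::real) \<and>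
     (\<forall>x. (\<forall>\<rho>\<in>J. \<rho> x < ennreal \<delta>) \<longrightarrow> q x < ennreal \<epsilon>)"
  shows "coarser (seminorm_topology Q) (seminorm_topology P)"
  unfolding coarser_def openin_sn
proof (intro allI impI ballI)
  fix U x0
  assume hU: "\<forall>x0\<in>U. \<exists>J \<epsilon>. finite J \<and> J \<subseteq> Q \<and> \<epsilon> > (0::real) \<and>
       {x. \<forall>\<rho>\<in>J. \<rho> (x - x0) < ennreal \<epsilon>} \<subseteq> U" and x0: "x0 \<in> U"
  have "\<exists>J \<epsilon>. finite J \<and> J \<subseteq> Q \<and> \<epsilon> > (0::real) \<and>
       {x. \<forall>\<rho>\<in>J. \<rho> (x - x0) < ennreal \<epsilon>} \<subseteq> U" using hU x0 by (rule bspec)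
  then obtain J \<epsilon> where J: "finite J" "J \<subseteq> Q" "\<epsilon> > 0" "{x. \<forall>\<rho>\<in>J. \<rho> (x - x0) < ennreal \<epsilon>} \<subseteq> U"
    by (elim exE conjE)
  have "\<forall>q\<in>J. \<exists>p. finite (fst p) \<and> fst p \<subseteq> P \<and> snd p > (0::real) \<and>
     (\<forall>x. (\<forall>\<rho>\<in>fst p. \<rho> x < ennreal (snd p)) \<longrightarrow> q x < ennreal \<epsilon>)"
  proof
    fix q assume "q \<in> J"
    then have "q \<in> Q" using J(2) by blast
    with cont have "\<forall>\<epsilon>>0. \<exists>J \<delta>. finite J \<and> J \<subseteq> P \<and> \<delta> > (0::real) \<and>
     (\<forall>x. (\<forall>\<rho>\<in>J. \<rho> x < ennreal \<delta>) \<longrightarrow> q x < ennreal \<epsilon>)" by (rule bspec)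
    then have "\<exists>J \<delta>. finite J \<and> J \<subseteq> P \<and> \<delta> > (0::real) \<and>
     (\<forall>x. (\<forall>\<rho>\<in>J. \<rho> x < ennreal \<delta>) \<longrightarrow> q x < ennreal \<epsilon>)" using J(3) by (rule ball_gt)
    then obtain J' \<delta> where "finite J' \<and> J' \<subseteq> P \<and> \<delta> > (0::real) \<and>
     (\<forall>x. (\<forall>\<rho>\<in>J'. \<rho> x < ennreal \<delta>) \<longrightarrow> q x < ennreal \<epsilon>)"
      by (elim exE)
    then show "\<exists>p. finite (fst p) \<and> fst p \<subseteq> P \<and> snd p > (0::real) \<and>
     (\<forall>x. (\<forall>\<rho>\<in>fst p. \<rho> x < ennreal (snd p)) \<longrightarrow> q x < ennreal \<epsilon>)"
      by (intro exI[of _ "(J', \<delta>)"]) simp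
  qed
  then obtain F where F: "\<forall>q\<in>J. finite (fst (F q)) \<and> fst (F q) \<subseteq> P \<and> snd (F q) > (0::real) \<and>
     (\<forall>x. (\<forall>\<rho>\<in>fst (F q). \<rho> x < ennreal (snd (F q))) \<longrightarrow> q x < ennreal \<epsilon>)"
    by (metis bchoice)
  show "\<exists>J \<epsilon>. finite J \<and> J \<subseteq> P \<and> \<epsilon> > (0::real) \<and>
       {x. \<forall>\<rho>\<in>J. \<rho> (x - x0) < ennreal \<epsilon>} \<subseteq> U"
  proof (cases "J = {}")
    case True
    then show ?thesis using J by (intro exI[of _ "{}"] exI[of _ 1]) auto
  next
    case False
    define J' where "J' = (\<Union>q\<in>J. fst (F q))"
    define \<delta> where "\<delta> = Min ((\<lambda>q. snd (F q)) ` J)"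
    have fin: "finite J'" unfolding J'_def using J F by auto
    have sub: "J' \<subseteq> P" unfolding J'_def using F by auto
    have dpos: "\<delta> > 0" unfolding \<delta>_def using J(1) False F by (subst Min_gr_iff) auto
    have "{x. \<forall>\<rho>\<in>J'. \<rho> (x - x0) < ennreal \<delta>} \<subseteq> U"
    proof
      fix x assume x: "x \<in> {x. \<forall>\<rho>\<in>J'. \<rho> (x - x0) < ennreal \<delta>}"
      have "\<forall>q\<in>J. q (x - x0) < ennreal \<epsilon>"
      proof
        fix q assume q: "q \<in> J"
        have "\<delta> \<le> snd (F q)" unfolding \<delta>_def using J(1) q by auto
        then have "ennreal \<delta> \<le> ennreal (snd (F q))" by (rule ennreal_leI)
        then have "\<forall>\<rho>\<in>fst (F q). \<rho> (x - x0) < ennreal (snd (F q))"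
          using x q unfolding J'_def by (auto intro: order.strict_trans2)
        then show "q (x - x0) < ennreal \<epsilon>" using F q by blast
      qed
      then show "x \<in> U" using J(4) by blast
    qed
    then show ?thesis using fin sub dpos by blast
  qed
qed

definition mk :: "'a::real_vector set \<Rightarrow> 'a \<Rightarrow> real" where
  "mk C x = Inf {t. 0 < t \<and> (1/t) *\<^sub>R x \<in> C}"

locale mkC =
  fixes C :: "'a::real_vector set"
  assumes cvx: "convex C" and sym: "\<And>x. x \<in> C \<Longrightarrow> - x \<in> C"
    and absb: "\<And>x. \<exists>\<delta>>0. \<delta> *\<^sub>R x \<in> C"
begin

definition S where "S x = {t. 0 < t \<and> (1/t) *\<^sub>R x \<in> C}"

lemma mk_S: "mk C x = Inf (S x)" unfolding mk_def S_def by simp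

lemma zero_in: "0 \<in> C"
proof -
  obtain \<delta> where "\<delta> > 0" "\<delta> *\<^sub>R (0::'a) \<in> C" using absb by blast
  then show ?thesis by simp
qed

lemma S_ne: "S x \<noteq> {}"
proof -
  obtain \<delta> where "\<delta> > 0" "\<delta> *\<^sub>R x \<in> C" using absb by blast
  then have "1/\<delta> \<in> S x" unfolding S_def by simp
  then show ?thesis by blast
qed

lemma S_bdd: "bdd_below (S x)"
  unfolding S_def by (rule bdd_belowI[of _ 0]) auto

lemma mk_lower: "t \<in> S x \<Longrightarrow> mk C x \<le> t"
  unfolding mk_S by (rule cInf_lower[OF _ S_bdd])

lemma mk_greatest: "(\<And>t. t \<in> S x \<Longrightarrow> r \<le> t) \<Longrightarrow> r \<le> mk C x"
  unfolding mk_S using S_ne by (rule cInf_greatest)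

lemma mk_nonneg: "0 \<le> mk C x"
  by (rule mk_greatest) (auto simp: S_def)

lemma convex_comb0: "y \<in> C \<Longrightarrow> 0 \<le> u \<Longrightarrow> u \<le> 1 \<Longrightarrow> u *\<^sub>R y \<in> C"
proof -
  assume y: "y \<in> C" and u: "0 \<le> u" "u \<le> 1"
  have "u *\<^sub>R y + (1 - u) *\<^sub>R 0 \<in> C"
    using convexD[OF cvx y zero_in, of u "1 - u"] u by simp
  then show ?thesis by simp
qed

lemma S_iff: "t \<in> S x \<longleftrightarrow> 0 < t \<and> (1/t) *\<^sub>R x \<in> C" unfolding S_def by simp

lemma S_scale: "\<alpha> > 0 \<Longrightarrow> t \<in> S (\<alpha> *\<^sub>R x) \<longleftrightarrow> t / \<alpha> \<in> S x"
  unfolding S_iff by (auto simp: field_simps)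

lemma mk_pos_hom: assumes a: "\<alpha> > 0" shows "mk C (\<alpha> *\<^sub>R x) = \<alpha> * mk C x"
proof (rule antisym)
  have "mk C (\<alpha> *\<^sub>R x) / \<alpha> \<le> mk C x"
  proof (rule mk_greatest)
    fix t assume "t \<in> S x"
    then have "\<alpha> * t \<in> S (\<alpha> *\<^sub>R x)" using S_scale[OF a] a by simp
    then have "mk C (\<alpha> *\<^sub>R x) \<le> \<alpha> * t" by (rule mk_lower)
    then show "mk C (\<alpha> *\<^sub>R x) / \<alpha> \<le> t" using a by (simp add: field_simps)
  qed
  then show "mk C (\<alpha> *\<^sub>R x) \<le> \<alpha> * mk C x" using a by (simp add: field_simps)
next
  have "mk C x \<le> mk C (\<alpha> *\<^sub>R x) / \<alpha>"
  proof -
    have "mk C x * \<alpha> \<le> mk C (\<alpha> *\<^sub>R x)"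
    proof (rule mk_greatest)
      fix t assume "t \<in> S (\<alpha> *\<^sub>R x)"
      then have "t / \<alpha> \<in> S x" using S_scale[OF a] by simp
      then have "mk C x \<le> t / \<alpha>" by (rule mk_lower)
      then show "mk C x * \<alpha> \<le> t" using a by (simp add: field_simps)
    qed
    then show ?thesis using a by (simp add: field_simps)
  qed
  then show "\<alpha> * mk C x \<le> mk C (\<alpha> *\<^sub>R x)" using a by (simp add: field_simps)
qed

lemma mk_zero: "mk C 0 = 0"
  using mk_pos_hom[of 2 0] by simp

lemma S_neg: "S (- x) = S x"
proof (rule set_eqI)
  fix t
  have e: "(1/t) *\<^sub>R (- x) = - ((1/t) *\<^sub>R x)" by simp
  show "t \<in> S (- x) \<longleftrightarrow> t \<in> S x"
    unfolding S_iff e using sym[of "(1/t) *\<^sub>R x"] sym[of "- ((1/t) *\<^sub>R x)"] by auto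
qed

lemma mk_neg: "mk C (- x) = mk C x"
  unfolding mk_S S_neg ..

lemma mk_hom: "mk C (\<alpha> *\<^sub>R x) = \<bar>\<alpha>\<bar> * mk C x"
proof -
  consider "\<alpha> > 0" | "\<alpha> = 0" | "\<alpha> < 0" by linarith
  then show ?thesis
  proof cases
    case 1 then show ?thesis by (simp add: mk_pos_hom)
  next
    case 2 then show ?thesis by (simp add: mk_zero)
  next
    case 3
    have e: "\<alpha> *\<^sub>R x = - (\<bar>\<alpha>\<bar> *\<^sub>R x)" using 3 by simp
    have "mk C (\<alpha> *\<^sub>R x) = mk C (- (\<bar>\<alpha>\<bar> *\<^sub>R x))" by (subst e) (rule refl)
    also have "\<dots> = mk C (\<bar>\<alpha>\<bar> *\<^sub>R x)" by (rule mk_neg)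
    also have "\<dots> = \<bar>\<alpha>\<bar> * mk C x" using 3 by (intro mk_pos_hom) simp
    finally show ?thesis .
  qed
qed

lemma S_add: assumes "s \<in> S x" "t \<in> S y" shows "s + t \<in> S (x + y)"
proof -
  have s: "s > 0" "(1/s) *\<^sub>R x \<in> C" and t: "t > 0" "(1/t) *\<^sub>R y \<in> C" using assms S_iff by auto
  have "(s/(s+t)) *\<^sub>R ((1/s) *\<^sub>R x) + (t/(s+t)) *\<^sub>R ((1/t) *\<^sub>R y) \<in> C"
    using convexD[OF cvx s(2) t(2), of "s/(s+t)" "t/(s+t)"] s(1) t(1)
    by (simp add: add_divide_distrib[symmetric])
  moreover have "(s/(s+t)) *\<^sub>R ((1/s) *\<^sub>R x) + (t/(s+t)) *\<^sub>R ((1/t) *\<^sub>R y) = (1/(s+t)) *\<^sub>R (x + y)"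
    using s t by (simp add: scaleR_add_right)
  ultimately show ?thesis using s t S_iff by auto
qed

lemma mk_add: "mk C (x + y) \<le> mk C x + mk C y"
proof -
  have "mk C (x + y) - mk C y \<le> mk C x"
  proof (rule mk_greatest)
    fix s assume s: "s \<in> S x"
    have "mk C (x + y) - s \<le> mk C y"
    proof (rule mk_greatest)
      fix t assume "t \<in> S y"
      then have "mk C (x + y) \<le> s + t" using S_add s mk_lower by blast
      then show "mk C (x + y) - s \<le> t" by simp
    qed
    then show "mk C (x + y) - mk C y \<le> s" by simp
  qed
  then show ?thesis by simp
qed

lemma mk_unit: assumes "mk C x < 1" shows "x \<in> C"
proof -
  obtain t where t: "t \<in> S x" "t < 1"
    using assms S_ne S_bdd unfolding mk_S by (auto simp: cInf_less_iff)
  then have "t > 0" "(1/t) *\<^sub>R x \<in> C" using S_iff by auto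
  then have "t *\<^sub>R ((1/t) *\<^sub>R x) \<in> C" using convex_comb0[of "(1/t) *\<^sub>R x" t] t(2) by simp
  then show ?thesis using \<open>t > 0\<close> by simp
qed

lemma mk_cont:
  assumes sn: "\<forall>\<rho>\<in>J. ext_seminorm \<rho>" and d: "\<delta> > 0"
    and N: "\<forall>x. (\<forall>\<rho>\<in>J. \<rho> x < ennreal \<delta>) \<longrightarrow> x \<in> C"
    and e: "\<epsilon> > 0" and x: "\<forall>\<rho>\<in>J. \<rho> x < ennreal (\<epsilon>/2 * \<delta>)"
  shows "mk C x < \<epsilon>"
proof -
  define \<eta> where "\<eta> = \<epsilon>/2"
  have eta: "\<eta> > 0" using e by (simp add: \<eta>_def)
  have "\<forall>\<rho>\<in>J. \<rho> ((1/\<eta>) *\<^sub>R x) < ennreal \<delta>"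
  proof
    fix \<rho> assume r: "\<rho> \<in> J"
    have "\<rho> ((1/\<eta>) *\<^sub>R x) = ennreal \<bar>1/\<eta>\<bar> * \<rho> x"
      using sn r unfolding ext_seminorm_def by blast
    also have "\<bar>1/\<eta>\<bar> = 1/\<eta>" using eta by simp
    finally have "\<rho> ((1/\<eta>) *\<^sub>R x) = ennreal (1/\<eta>) * \<rho> x" .
    also have "\<dots> < ennreal (1/\<eta>) * ennreal (\<eta> * \<delta>)"
      using x r eta by (intro ennreal_mult_strict_left_mono) (auto simp: \<eta>_def)
    also have "\<dots> = ennreal (1/\<eta> * (\<eta> * \<delta>))" using eta d by (intro ennreal_mult[symmetric]) auto
    also have "\<dots> = ennreal \<delta>" using eta by simp
    finally show "\<rho> ((1/\<eta>) *\<^sub>R x) < ennreal \<delta>" .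
  qed
  then have "\<eta> \<in> S x" using N eta S_iff by auto
  then have "mk C x \<le> \<eta>" by (rule mk_lower)
  then show ?thesis using e by (simp add: \<eta>_def)
qed

end


lemma ext_sn_neg: "ext_seminorm \<rho> \<Longrightarrow> \<rho> (- x) = \<rho> x"
  unfolding ext_seminorm_def by (metis abs_minus_cancel abs_one ennreal_1 mult_1 scaleR_minus1_left)


lemma Ca_mkC:
  fixes A :: "'a::real_vector set"
  assumes cv: "convex (- A)" and core: "a \<in> algebraic_core (- A)"
  shows "mkC {x. a + x \<in> - A \<and> a - x \<in> - A}"
proof
  show "convex {x. a + x \<in> - A \<and> a - x \<in> - A}" unfolding convex_def
  proof (intro ballI allI impI)
    fix x y u v assume xy: "x \<in> {x. a + x \<in> - A \<and> a - x \<in> - A}" "y \<in> {x. a + x \<in> - A \<and> a - x \<in> - A}"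
      and uv: "0 \<le> (u::real)" "0 \<le> v" "u + v = 1"
    have v: "v = 1 - u" using uv by simp
    have "u *\<^sub>R (a + x) + v *\<^sub>R (a + y) \<in> - A" "u *\<^sub>R (a - x) + v *\<^sub>R (a - y) \<in> - A"
      using convexD[OF cv _ _ uv, of "a + x" "a + y"] convexD[OF cv _ _ uv, of "a - x" "a - y"] xy
      by simp_all
    moreover have "u *\<^sub>R (a + x) + v *\<^sub>R (a + y) = a + (u *\<^sub>R x + v *\<^sub>R y)"
      "u *\<^sub>R (a - x) + v *\<^sub>R (a - y) = a - (u *\<^sub>R x + v *\<^sub>R y)"
      unfolding v by (simp_all add: algebra_simps)
    ultimately show "u *\<^sub>R x + v *\<^sub>R y \<in> {x. a + x \<in> - A \<and> a - x \<in> - A}" by simp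
  qed
next
  fix x assume "x \<in> {x. a + x \<in> - A \<and> a - x \<in> - A}"
  then show "- x \<in> {x. a + x \<in> - A \<and> a - x \<in> - A}" by simp
next
  fix x
  obtain d1 where d1: "d1 > 0" "\<forall>t. 0 \<le> t \<and> t \<le> d1 \<longrightarrow> a + t *\<^sub>R x \<in> - A"
    using core unfolding algebraic_core_def by blast
  obtain d2 where d2: "d2 > 0" "\<forall>t. 0 \<le> t \<and> t \<le> d2 \<longrightarrow> a + t *\<^sub>R (- x) \<in> - A"
    using core unfolding algebraic_core_def by blast
  have m: "0 \<le> min d1 d2" "min d1 d2 \<le> d1" "min d1 d2 \<le> d2" using d1 d2 by auto
  have "a + min d1 d2 *\<^sub>R x \<in> - A" using d1(2) m by blast
  moreover have "a + min d1 d2 *\<^sub>R (- x) \<in> - A" using d2(2) m by blast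
  ultimately have "min d1 d2 *\<^sub>R x \<in> {x. a + x \<in> - A \<and> a - x \<in> - A}" by simp
  then show "\<exists>\<delta>>0. \<delta> *\<^sub>R x \<in> {x. a + x \<in> - A \<and> a - x \<in> - A}" using d1 d2 by (intro exI[of _ "min d1 d2"]) auto
qed

lemma Ca_nb:
  fixes A :: "'a::real_vector set"
  assumes P: "\<forall>\<rho>\<in>P. ext_seminorm \<rho>" and openA: "openin (seminorm_topology P) (- A)" and a: "a \<in> - A"
  shows "\<exists>J \<delta>. finite J \<and> J \<subseteq> P \<and> \<delta> > (0::real) \<and>
     (\<forall>x. (\<forall>\<rho>\<in>J. \<rho> x < ennreal \<delta>) \<longrightarrow> x \<in> {x. a + x \<in> - A \<and> a - x \<in> - A})"
proof -
  have "\<forall>x0\<in>- A. \<exists>J \<epsilon>. finite J \<and> J \<subseteq> P \<and> \<epsilon> > (0::real) \<and>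
     {x. \<forall>\<rho>\<in>J. \<rho> (x - x0) < ennreal \<epsilon>} \<subseteq> - A" using openA unfolding openin_sn .
  then have "\<exists>J \<epsilon>. finite J \<and> J \<subseteq> P \<and> \<epsilon> > (0::real) \<and>
     {x. \<forall>\<rho>\<in>J. \<rho> (x - a) < ennreal \<epsilon>} \<subseteq> - A" using a by (rule bspec)
  then obtain J \<delta> where J: "finite J" "J \<subseteq> P" "\<delta> > 0" "{x. \<forall>\<rho>\<in>J. \<rho> (x - a) < ennreal \<delta>} \<subseteq> - A"
    by (elim exE conjE)
  have "\<forall>x. (\<forall>\<rho>\<in>J. \<rho> x < ennreal \<delta>) \<longrightarrow> x \<in> {x. a + x \<in> - A \<and> a - x \<in> - A}"
  proof (intro allI impI)
    fix x assume x: "\<forall>\<rho>\<in>J. \<rho> x < ennreal \<delta>"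
    have "a + x \<in> {x. \<forall>\<rho>\<in>J. \<rho> (x - a) < ennreal \<delta>}" using x by simp
    then have 1: "a + x \<in> - A" using J(4) by (rule subsetD[rotated])
    have "\<forall>\<rho>\<in>J. \<rho> ((a - x) - a) < ennreal \<delta>"
    proof
      fix \<rho> assume r: "\<rho> \<in> J"
      then have "ext_seminorm \<rho>" using J(2) P by blast
      then have "\<rho> ((a - x) - a) = \<rho> x" using ext_sn_neg[of \<rho> x] by simp
      then show "\<rho> ((a - x) - a) < ennreal \<delta>" using x r by simp
    qed
    then have "a - x \<in> {x. \<forall>\<rho>\<in>J. \<rho> (x - a) < ennreal \<delta>}" by simp
    then have 2: "a - x \<in> - A" using J(4) by (rule subsetD[rotated])
    show "x \<in> {x. a + x \<in> - A \<and> a - x \<in> - A}" using 1 2 by simp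
  qed
  then show ?thesis using J(1,2,3) by blast
qed

lemma q_sn:
  assumes M: "mkC C"
  shows "ext_seminorm (\<lambda>x. ennreal (mk C x)) \<and> (\<forall>x. ennreal (mk C x) < \<infinity>)"
proof -
  have "ext_seminorm (\<lambda>x. ennreal (mk C x))" unfolding ext_seminorm_def
  proof (intro conjI allI)
    fix \<alpha> x show "ennreal (mk C (\<alpha> *\<^sub>R x)) = ennreal \<bar>\<alpha>\<bar> * ennreal (mk C x)"
      by (simp add: mkC.mk_hom[OF M] ennreal_mult mkC.mk_nonneg[OF M])
  next
    fix x y show "ennreal (mk C (x + y)) \<le> ennreal (mk C x) + ennreal (mk C y)"
      using mkC.mk_add[OF M, of x y]
      by (simp add: ennreal_leI mkC.mk_nonneg[OF M] ennreal_plus[symmetric] del: ennreal_plus)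
  qed
  then show ?thesis by simp
qed

lemma q_cont:
  assumes M: "mkC C" and P: "\<forall>\<rho>\<in>P. ext_seminorm \<rho>"
    and nb: "\<exists>J \<delta>. finite J \<and> J \<subseteq> P \<and> \<delta> > (0::real) \<and> (\<forall>x. (\<forall>\<rho>\<in>J. \<rho> x < ennreal \<delta>) \<longrightarrow> x \<in> C)"
  shows "\<forall>\<epsilon>>0. \<exists>J \<delta>. finite J \<and> J \<subseteq> P \<and> \<delta> > (0::real) \<and>
       (\<forall>x. (\<forall>\<rho>\<in>J. \<rho> x < ennreal \<delta>) \<longrightarrow> ennreal (mk C x) < ennreal \<epsilon>)"
proof (intro allI impI)
  fix \<epsilon> :: real assume e: "\<epsilon> > 0"
  obtain J \<delta> where J: "finite J" "J \<subseteq> P" "\<delta> > 0" "\<forall>x. (\<forall>\<rho>\<in>J. \<rho> x < ennreal \<delta>) \<longrightarrow> x \<in> C"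
    using nb by (elim exE conjE)
  have sn: "\<forall>\<rho>\<in>J. ext_seminorm \<rho>" using J(2) P by blast
  have "\<forall>x. (\<forall>\<rho>\<in>J. \<rho> x < ennreal (\<epsilon>/2 * \<delta>)) \<longrightarrow> ennreal (mk C x) < ennreal \<epsilon>"
  proof (intro allI impI)
    fix x assume "\<forall>\<rho>\<in>J. \<rho> x < ennreal (\<epsilon>/2 * \<delta>)"
    then have "mk C x < \<epsilon>" by (rule mkC.mk_cont[OF M sn J(3) J(4) e])
    then show "ennreal (mk C x) < ennreal \<epsilon>" using mkC.mk_nonneg[OF M, of x] by (simp add: ennreal_less_iff)
  qed
  moreover have "\<epsilon>/2 * \<delta> > 0" using e J(3) by simp
  ultimately show "\<exists>J \<delta>. finite J \<and> J \<subseteq> P \<and> \<delta> > (0::real) \<and>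
       (\<forall>x. (\<forall>\<rho>\<in>J. \<rho> x < ennreal \<delta>) \<longrightarrow> ennreal (mk C x) < ennreal \<epsilon>)"
    using J(1,2) by blast
qed

lemma dir1:
  fixes A :: "'a::real_vector set"
  assumes P\<tau>: "\<forall>\<rho>\<in>P\<tau>. ext_seminorm \<rho>"
    and fin: "finest_lc_topology (seminorm_topology P\<tau>) \<tau>F"
    and cv: "convex (- A)"
    and core: "algebraic_core (- A) = - A"
    and openA: "openin (seminorm_topology P\<tau>) (- A)"
  shows "openin \<tau>F (- A)"
proof -
  define Q where "Q = (\<lambda>a x. ennreal (mk {x. a + x \<in> - A \<and> a - x \<in> - A} x)) ` (- A)"
  have M: "mkC {x. a + x \<in> - A \<and> a - x \<in> - A}" if a: "a \<in> - A" for a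
    using Ca_mkC[OF cv] a core by blast
  have Qsn: "\<forall>\<rho>\<in>Q. ext_seminorm \<rho> \<and> (\<forall>x. \<rho> x < \<infinity>)"
  proof
    fix \<rho> assume "\<rho> \<in> Q"
    then obtain a where a: "a \<in> - A" and r: "\<rho> = (\<lambda>x. ennreal (mk {x. a + x \<in> - A \<and> a - x \<in> - A} x))"
      unfolding Q_def by blast
    show "ext_seminorm \<rho> \<and> (\<forall>x. \<rho> x < \<infinity>)" unfolding r by (rule q_sn[OF M[OF a]])
  qed
  have lc: "locally_convex (seminorm_topology Q)" unfolding locally_convex_def
    using Qsn by blast
  have cont: "\<forall>q\<in>Q. \<forall>\<epsilon>>0. \<exists>J \<delta>. finite J \<and> J \<subseteq> P\<tau> \<and> \<delta> > (0::real) \<and>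
     (\<forall>x. (\<forall>\<rho>\<in>J. \<rho> x < ennreal \<delta>) \<longrightarrow> q x < ennreal \<epsilon>)"
    unfolding Q_def
  proof
    fix q assume "q \<in> (\<lambda>a x. ennreal (mk {x. a + x \<in> - A \<and> a - x \<in> - A} x)) ` (- A)"
    then obtain a where a: "a \<in> - A" and q: "q = (\<lambda>x. ennreal (mk {x. a + x \<in> - A \<and> a - x \<in> - A} x))"
      by blast
    show "\<forall>\<epsilon>>0. \<exists>J \<delta>. finite J \<and> J \<subseteq> P\<tau> \<and> \<delta> > (0::real) \<and>
     (\<forall>x. (\<forall>\<rho>\<in>J. \<rho> x < ennreal \<delta>) \<longrightarrow> q x < ennreal \<epsilon>)"
      unfolding q by (rule q_cont[OF M[OF a] P\<tau> Ca_nb[OF P\<tau> openA a]])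
  qed
  have c1: "coarser (seminorm_topology Q) (seminorm_topology P\<tau>)"
    by (rule coarser_sn[OF cont])
  have c2: "coarser (seminorm_topology Q) \<tau>F" using fin lc c1 unfolding finest_lc_topology_def by blast
  have "openin (seminorm_topology Q) (- A)" unfolding openin_sn
  proof
    fix a assume a: "a \<in> - A"
    have "{x. \<forall>\<rho>\<in>{\<lambda>x. ennreal (mk {x. a + x \<in> - A \<and> a - x \<in> - A} x)}. \<rho> (x - a) < ennreal 1} \<subseteq> - A"
    proof
      fix x assume "x \<in> {x. \<forall>\<rho>\<in>{\<lambda>x. ennreal (mk {x. a + x \<in> - A \<and> a - x \<in> - A} x)}. \<rho> (x - a) < ennreal 1}"
      then have "ennreal (mk {x. a + x \<in> - A \<and> a - x \<in> - A} (x - a)) < ennreal 1" by simp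
      then have "mk {x. a + x \<in> - A \<and> a - x \<in> - A} (x - a) < 1"
        by (simp add: ennreal_less_iff mkC.mk_nonneg[OF M[OF a]])
      then have "x - a \<in> {x. a + x \<in> - A \<and> a - x \<in> - A}" by (rule mkC.mk_unit[OF M[OF a]])
      then show "x \<in> - A" by simp
    qed
    moreover have "(\<lambda>x. ennreal (mk {x. a + x \<in> - A \<and> a - x \<in> - A} x)) \<in> Q" unfolding Q_def using a by blast
    ultimately show "\<exists>J \<epsilon>. finite J \<and> J \<subseteq> Q \<and> \<epsilon> > (0::real) \<and>
       {x. \<forall>\<rho>\<in>J. \<rho> (x - a) < ennreal \<epsilon>} \<subseteq> - A"
      by (intro exI[of _ "{\<lambda>x. ennreal (mk {x. a + x \<in> - A \<and> a - x \<in> - A} x)}"] exI[of _ 1]) simp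
  qed
  then show "openin \<tau>F (- A)" using c2 unfolding coarser_def by blast
qed

lemma core_sub: "algebraic_core B \<subseteq> B"
proof
  fix a assume "a \<in> algebraic_core B"
  then obtain \<delta> :: real where d: "\<delta> > 0" "\<forall>t. 0 \<le> t \<and> t \<le> \<delta> \<longrightarrow> a + t *\<^sub>R 0 \<in> B"
    unfolding algebraic_core_def by blast
  from d(2) have "0 \<le> (0::real) \<and> 0 \<le> \<delta> \<longrightarrow> a + 0 *\<^sub>R 0 \<in> B" by (rule spec)
  then have "a + 0 *\<^sub>R 0 \<in> B" using d(1) by (meson less_imp_le order_refl)
  then show "a \<in> B" by simp
qed

lemma dir2_core:
  fixes A :: "'a::real_vector set"
  assumes PF: "\<forall>\<rho>\<in>PF. ext_seminorm \<rho> \<and> (\<forall>x. \<rho> x < \<infinity>)"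
    and oF: "openin (seminorm_topology PF) (- A)" and a: "a \<in> - A"
  shows "a \<in> algebraic_core (- A)"
proof -
  have "\<forall>x0\<in>- A. \<exists>J \<epsilon>. finite J \<and> J \<subseteq> PF \<and> \<epsilon> > (0::real) \<and>
     {x. \<forall>\<rho>\<in>J. \<rho> (x - x0) < ennreal \<epsilon>} \<subseteq> - A" using oF unfolding openin_sn .
  then have "\<exists>J \<epsilon>. finite J \<and> J \<subseteq> PF \<and> \<epsilon> > (0::real) \<and>
     {x. \<forall>\<rho>\<in>J. \<rho> (x - a) < ennreal \<epsilon>} \<subseteq> - A" using a by (rule bspec)
  then obtain J \<epsilon> where J: "finite J" "J \<subseteq> PF" "\<epsilon> > 0" "{x. \<forall>\<rho>\<in>J. \<rho> (x - a) < ennreal \<epsilon>} \<subseteq> - A"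
    by (elim exE conjE)
  show "a \<in> algebraic_core (- A)" unfolding algebraic_core_def
  proof (intro CollectI allI)
    fix x
    define M where "M = (\<Sum>\<rho>\<in>J. enn2real (\<rho> x))"
    have M0: "M \<ge> 0" unfolding M_def by (simp add: sum_nonneg)
    define \<delta> where "\<delta> = \<epsilon> / (M + 1)"
    have dpos: "\<delta> > 0" using M0 J(3) by (simp add: \<delta>_def)
    have "\<forall>t. 0 \<le> t \<and> t \<le> \<delta> \<longrightarrow> a + t *\<^sub>R x \<in> - A"
    proof (intro allI impI)
      fix t assume t: "0 \<le> t \<and> t \<le> \<delta>"
      have "\<forall>\<rho>\<in>J. \<rho> ((a + t *\<^sub>R x) - a) < ennreal \<epsilon>"
      proof
        fix \<rho> assume r: "\<rho> \<in> J"
        have sn: "ext_seminorm \<rho>" and fin: "\<rho> x < \<infinity>" using r J(2) PF by auto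
        define r0 where "r0 = enn2real (\<rho> x)"
        have rx: "\<rho> x = ennreal r0" unfolding r0_def using fin by (simp add: ennreal_enn2real_if)
        have r00: "r0 \<ge> 0" unfolding r0_def by simp
        have rM: "r0 \<le> M" unfolding M_def r0_def
          by (rule member_le_sum) (use r J(1) in auto)
        have "t * r0 \<le> \<delta> * M" using t r00 rM M0 by (intro mult_mono) auto
        also have "\<delta> * M < \<epsilon>" using M0 J(3) by (simp add: \<delta>_def field_simps)
        finally have tr: "t * r0 < \<epsilon>" .
        have "\<rho> ((a + t *\<^sub>R x) - a) = ennreal t * \<rho> x"
          using sn t unfolding ext_seminorm_def by simp
        also have "\<dots> = ennreal (t * r0)" using t r00 rx by (simp add: ennreal_mult)
        also have "\<dots> < ennreal \<epsilon>" using tr t r00 by (simp add: ennreal_less_iff)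
        finally show "\<rho> ((a + t *\<^sub>R x) - a) < ennreal \<epsilon>" .
      qed
      then show "a + t *\<^sub>R x \<in> - A" using J(4) by blast
    qed
    then show "\<exists>\<delta>>0. \<forall>t. 0 \<le> t \<and> t \<le> \<delta> \<longrightarrow> a + t *\<^sub>R x \<in> - A" using dpos by blast
  qed
qed

theorem theorem3p14:
  fixes \<tau> \<tau>F :: "'a::real_vector topology" and A :: "'a set"
  assumes "ext_locally_convex \<tau>" and "Hausdorff_space \<tau>"
    and "finest_lc_topology \<tau> \<tau>F"
    and "convex A" and "convex (- A)"
  shows "(algebraic_core (- A) = - A \<and> closedin \<tau> A) \<longleftrightarrow> closedin \<tau>F A"
proof -
  obtain P\<tau> where P\<tau>: "\<forall>\<rho>\<in>P\<tau>. ext_seminorm \<rho>" "\<tau> = seminorm_topology P\<tau>"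
    using assms(1) unfolding ext_locally_convex_def by blast
  obtain PF where PF: "\<forall>\<rho>\<in>PF. ext_seminorm \<rho> \<and> (\<forall>x. \<rho> x < \<infinity>)" "\<tau>F = seminorm_topology PF"
    using assms(3) unfolding finest_lc_topology_def locally_convex_def by blast
  have cFt: "coarser \<tau>F \<tau>" using assms(3) unfolding finest_lc_topology_def by blast
  have cl_iff: "closedin (seminorm_topology P) A \<longleftrightarrow> openin (seminorm_topology P) (- A)" for P
    unfolding closedin_def topspace_sn by (simp add: Compl_eq_Diff_UNIV)
  have fin: "finest_lc_topology (seminorm_topology P\<tau>) \<tau>F" using assms(3) P\<tau>(2) by simp
  show ?thesis
  proof
    assume H: "algebraic_core (- A) = - A \<and> closedin \<tau> A"
    have openA: "openin (seminorm_topology P\<tau>) (- A)" using H cl_iff P\<tau>(2) by blast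
    have "openin \<tau>F (- A)" using dir1[OF P\<tau>(1) fin assms(5) _ openA] H by blast
    then show "closedin \<tau>F A" using cl_iff PF(2) by blast
  next
    assume H: "closedin \<tau>F A"
    then have oF: "openin \<tau>F (- A)" using cl_iff PF(2) by blast
    then have "openin \<tau> (- A)" using cFt unfolding coarser_def by blast
    then have cl: "closedin \<tau> A" using cl_iff P\<tau>(2) by blast
    have "- A \<subseteq> algebraic_core (- A)"
      using dir2_core[OF PF(1)] oF PF(2) by blast
    then show "algebraic_core (- A) = - A \<and> closedin \<tau> A" using cl core_sub[of "- A"] by blast
  qed
qed

end
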